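(* Let $q'>0$, $e'\in(0,1)$, $q_{\max}>0$, $\mathcal D_3=\{(\omega,\omega'):0\le\omega\le\pi/2,\ 0\le\omega'\le\pi\}$, $\mathcal D_4=\{(q,e):0<q\le q_{\max},\ 0\le e\le1\}$. Then: (i) for each $(q,e)\in\mathcal D_4$ and $(\omega,\omega')\in\mathcal D_3$, $$\delta_{\rm int}(q,e,\omega,\omega')\ge\delta_{\rm int}(q,e,0,\pi)=q'-\frac{q(1+e)}{1-e},\qquad \delta_{\rm ext}(q,e,\omega,\omega')\ge\delta_{\rm ext}(q,e,0,\pi)=q-Q';$$ hence for given $(q,e)$ there are internal nodes for all $(\omega,\omega')\in\mathcal D_3$ iff $q'-\frac{q(1+e)}{1-e}>0$, and external nodes for all $(\omega,\omega')\in\mathcal D_3$ iff $q-Q'>0$; (ii) if $q'-\frac{q(1+e)}{1-e}\le0$ and $q-Q'\le0$, then there exists $(\omega,\omega')\in\mathcal D_3$ with $d^+d^-=0$.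
   Context: For $q>0$, $e\in[0,1]$ and angles $\omega,\omega'$, define $r_{\pm}=\frac{q(1+e)}{1\pm e\cos\omega}$, $r'_{\pm}=\frac{q'(1+e')}{1\pm e'\cos\omega'}$ (extended-real values allowed; $\frac{q(1+e)}{1-e}=+\infty$ for $e=1$), $d^+=r'_+-r_+$, $d^-=r'_--r_-$, $\delta_{\rm int}=\min\{d^+,d^-\}$, $\delta_{\rm ext}=\min\{-d^+,-d^-\}$, $Q'=\frac{q'(1+e')}{1-e'}$. Internal nodes: $d^\pm>0$; external nodes: $d^\pm<0$. *)

theory Defs
  imports "HOL-Analysis.Analysis"
begin

text \<open>Extended-real conventions: a fraction q(1+e)/0 with q(1+e) > 0 is +\<infinity>.\<close>

definition r_plus :: "real \<Rightarrow> real \<Rightarrow> real \<Rightarrow> ereal" where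
  "r_plus q e w = (if 1 + e * cos w = 0 then \<infinity> else ereal (q * (1 + e) / (1 + e * cos w)))"

definition r_minus :: "real \<Rightarrow> real \<Rightarrow> real \<Rightarrow> ereal" where
  "r_minus q e w = (if 1 - e * cos w = 0 then \<infinity> else ereal (q * (1 + e) / (1 - e * cos w)))"

definition apo :: "real \<Rightarrow> real \<Rightarrow> ereal" where
  "apo q e = (if e = 1 then \<infinity> else ereal (q * (1 + e) / (1 - e)))"

definition d_plus :: "real \<Rightarrow> real \<Rightarrow> real \<Rightarrow> real \<Rightarrow> real \<Rightarrow> real \<Rightarrow> ereal" where
  "d_plus q' e' q e w w' = r_plus q' e' w' - r_plus q e w"

definition d_minus :: "real \<Rightarrow> real \<Rightarrow> real \<Rightarrow> real \<Rightarrow> real \<Rightarrow> real \<Rightarrow> ereal" where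
  "d_minus q' e' q e w w' = r_minus q' e' w' - r_minus q e w"

definition delta_int :: "real \<Rightarrow> real \<Rightarrow> real \<Rightarrow> real \<Rightarrow> real \<Rightarrow> real \<Rightarrow> ereal" where
  "delta_int q' e' q e w w' = min (d_plus q' e' q e w w') (d_minus q' e' q e w w')"

definition delta_ext :: "real \<Rightarrow> real \<Rightarrow> real \<Rightarrow> real \<Rightarrow> real \<Rightarrow> real \<Rightarrow> ereal" where
  "delta_ext q' e' q e w w' = min (- d_plus q' e' q e w w') (- d_minus q' e' q e w w')"

definition D3 :: "(real \<times> real) set" where
  "D3 = {(w, w'). 0 \<le> w \<and> w \<le> pi / 2 \<and> 0 \<le> w' \<and> w' \<le> pi}"

definition D4 :: "real \<Rightarrow> (real \<times> real) set" where
  "D4 qmax = {(q, e). 0 < q \<and> q \<le> qmax \<and> 0 \<le> e \<and> e \<le> 1}"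

end

theory Submission
  imports Defs
begin

lemma rp_bound:
  assumes "0 < q" "0 \<le> e" "e < 1" "cos w \<ge> -1" "cos w \<le> 1"
  shows "\<exists>a. r_plus q e w = ereal a \<and> q \<le> a \<and> a \<le> q*(1+e)/(1-e)"
proof -
  have d: "1 + e * cos w \<ge> 1 - e" using assms mult_left_mono[of "-1" "cos w" e] by simp
  have d2: "1 + e * cos w \<le> 1 + e" using assms mult_left_mono[of "cos w" 1 e] by simp
  have p: "1 + e * cos w > 0" using d assms by simp
  have "q*(1+e*cos w) \<le> q*(1+e)" using mult_left_mono[OF d2, of q] assms by simp
  hence "q \<le> q*(1+e)/(1+e*cos w)" using p by (simp add: le_divide_eq)
  moreover have "q*(1+e)/(1+e*cos w) \<le> q*(1+e)/(1-e)"
    using p d assms by (intro divide_left_mono) auto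
  ultimately show ?thesis using p unfolding r_plus_def by auto
qed

lemma rm_bound:
  assumes "0 < q" "0 \<le> e" "e < 1" "cos w \<ge> -1" "cos w \<le> 1"
  shows "\<exists>a. r_minus q e w = ereal a \<and> q \<le> a \<and> a \<le> q*(1+e)/(1-e)"
proof -
  have d: "1 - e * cos w \<ge> 1 - e" using assms mult_left_mono[of "cos w" 1 e] by simp
  have d2: "1 - e * cos w \<le> 1 + e" using assms mult_left_mono[of "-1" "cos w" e] by simp
  have p: "1 - e * cos w > 0" using d assms by simp
  have "q*(1-e*cos w) \<le> q*(1+e)" using mult_left_mono[OF d2, of q] assms by simp
  hence "q \<le> q*(1+e)/(1-e*cos w)" using p by (simp add: le_divide_eq)
  moreover have "q*(1+e)/(1-e*cos w) \<le> q*(1+e)/(1-e)"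
    using p d assms by (intro divide_left_mono) auto
  ultimately show ?thesis using p unfolding r_minus_def by auto
qed

lemma rp_small:
  assumes "0 < q" "0 \<le> e" "e \<le> 1" "0 \<le> w" "w \<le> pi/2"
  shows "\<exists>a. r_plus q e w = ereal a \<and> q \<le> a \<and> a \<le> q*(1+e)"
proof -
  have c: "cos w \<ge> 0" "cos w \<le> 1" using assms by (auto intro: cos_ge_zero)
  have d2: "1 + e * cos w \<le> 1 + e" using assms c mult_left_mono[of "cos w" 1 e] by simp
  have p: "1 + e * cos w \<ge> 1" using assms c by simp
  have "q*(1+e*cos w) \<le> q*(1+e)" using mult_left_mono[OF d2, of q] assms by simp
  hence "q \<le> q*(1+e)/(1+e*cos w)" using p by (simp add: le_divide_eq)
  moreover have "q*(1+e)/(1+e*cos w) \<le> q*(1+e)"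
    using p assms by (simp add: divide_le_eq mult_left_mono)
  ultimately show ?thesis using p unfolding r_plus_def by auto
qed

lemma rm_small:
  assumes "0 < q" "0 \<le> e" "e \<le> 1" "0 \<le> w" "w \<le> pi/2"
  shows "r_minus q e w = \<infinity> \<or> (\<exists>a. r_minus q e w = ereal a \<and> q*(1+e) \<le> a \<and> (e < 1 \<longrightarrow> a \<le> q*(1+e)/(1-e)))"
proof (cases "1 - e * cos w = 0")
  case True then show ?thesis by (simp add: r_minus_def)
next
  case False
  have c: "cos w \<ge> 0" "cos w \<le> 1" using assms by (auto intro: cos_ge_zero)
  have d: "1 - e * cos w \<ge> 1 - e" using assms c mult_left_mono[of "cos w" 1 e] by simp
  have d1: "1 - e * cos w \<le> 1" using assms c by simp
  have p: "1 - e * cos w > 0" using d False assms by simp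
  have "q*(1+e)*(1-e*cos w) \<le> q*(1+e)" using mult_left_mono[OF d1, of "q*(1+e)"] assms by simp
  hence "q*(1+e) \<le> q*(1+e)/(1-e*cos w)" using p by (simp add: le_divide_eq)
  moreover have "e < 1 \<longrightarrow> q*(1+e)/(1-e*cos w) \<le> q*(1+e)/(1-e)"
    using p d assms by (auto intro: divide_left_mono)
  ultimately show ?thesis using False unfolding r_minus_def by auto
qed

lemma part_i:
  fixes q' e' q e Q' :: real
  assumes "q' > 0" "0 < e'" "e' < 1" and Q': "Q' = q' * (1 + e') / (1 - e')"
    and qe: "0 < q" "0 \<le> e" "e \<le> 1"
  shows "(\<forall>(w, w') \<in> D3.
            delta_int q' e' q e w w' \<ge> delta_int q' e' q e 0 pi
          \<and> delta_ext q' e' q e w w' \<ge> delta_ext q' e' q e 0 pi)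
      \<and> delta_int q' e' q e 0 pi = ereal q' - apo q e
      \<and> delta_ext q' e' q e 0 pi = ereal (q - Q')
      \<and> ((\<forall>(w, w') \<in> D3. d_plus q' e' q e w w' > 0 \<and> d_minus q' e' q e w w' > 0)
           \<longleftrightarrow> ereal q' - apo q e > 0)
      \<and> ((\<forall>(w, w') \<in> D3. d_plus q' e' q e w w' < 0 \<and> d_minus q' e' q e w w' < 0)
           \<longleftrightarrow> q - Q' > 0)"
proof -
  have rp0: "r_plus q e 0 = ereal q" using qe by (simp add: r_plus_def)
  have rm0: "r_minus q e 0 = apo q e" using qe by (simp add: r_minus_def apo_def)
  have rpp: "r_plus q' e' pi = ereal Q'" using assms by (simp add: r_plus_def Q')
  have rmp: "r_minus q' e' pi = ereal q'" using assms by (simp add: r_minus_def)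
  have qQ: "q' \<le> Q'" using rp_bound[of q' e' pi] assms rpp by auto
  have dp0: "d_plus q' e' q e 0 pi = ereal (Q' - q)" by (simp add: d_plus_def rp0 rpp)
  have dm0: "d_minus q' e' q e 0 pi = ereal q' - apo q e" by (simp add: d_minus_def rm0 rmp)
  have D30: "(0, pi) \<in> D3" by (simp add: D3_def)
  have apo_ge: "apo q e \<ge> ereal (q*(1+e))"
  proof (cases "e = 1")
    case False
    hence "0 < 1 - e" "1 - e \<le> 1" using qe by auto
    hence "q*(1+e)*(1-e) \<le> q*(1+e)" using qe mult_left_mono[of "1-e" 1 "q*(1+e)"] by simp
    hence "q*(1+e) \<le> q*(1+e)/(1-e)" using \<open>0 < 1 - e\<close> by (simp add: le_divide_eq)
    thus ?thesis using False by (simp add: apo_def)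
  qed (simp add: apo_def)
  have qq0: "q \<le> q*(1+e)" using qe mult_left_mono[of 1 "1+e" q] by simp
  have di0: "delta_int q' e' q e 0 pi = ereal q' - apo q e"
  proof -
    have "ereal q' - apo q e \<le> ereal (q' - q*(1+e))" using apo_ge
      by (metis ereal_minus(1) ereal_minus_mono order_refl)
    also have "\<dots> \<le> ereal (Q' - q)" using qQ qq0 by simp
    finally show ?thesis unfolding delta_int_def dp0 dm0 by (simp add: min_def)
  qed
  have de0: "delta_ext q' e' q e 0 pi = ereal (q - Q')"
  proof -
    have "ereal (q - Q') \<le> ereal (q*(1+e) - q')" using qQ qq0 by simp
    also have "\<dots> \<le> - (ereal q' - apo q e)" using apo_ge
      by (cases "apo q e") auto
    finally show ?thesis unfolding delta_ext_def dp0 dm0 by (simp add: min_def)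
  qed
  have bnd: "delta_int q' e' q e w w' \<ge> ereal q' - apo q e \<and> delta_ext q' e' q e w w' \<ge> ereal (q - Q')"
    if "(w, w') \<in> D3" for w w'
  proof -
    have w: "0 \<le> w" "w \<le> pi/2" "0 \<le> w'" "w' \<le> pi" using that by (auto simp: D3_def)
    obtain A where A: "r_plus q' e' w' = ereal A" "q' \<le> A" "A \<le> Q'"
      using rp_bound[of q' e' w'] assms by auto
    obtain B where B: "r_minus q' e' w' = ereal B" "q' \<le> B" "B \<le> Q'"
      using rm_bound[of q' e' w'] assms by auto
    obtain a where a: "r_plus q e w = ereal a" "q \<le> a" "a \<le> q*(1+e)"
      using rp_small[of q e w] qe w by auto
    have rm: "r_minus q e w = \<infinity> \<or> (\<exists>x. r_minus q e w = ereal x \<and> q*(1+e) \<le> x \<and> (e < 1 \<longrightarrow> x \<le> q*(1+e)/(1-e)))"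
      using rm_small[of q e w] qe w by auto
    have qq: "q \<le> q*(1+e)" using qe mult_left_mono[of 1 "1+e" q] by simp
    have int: "delta_int q' e' q e w w' \<ge> ereal q' - apo q e"
    proof (cases "e = 1")
      case True thus ?thesis by (simp add: apo_def)
    next
      case False
      then have e1: "e < 1" using qe by auto
      have ap: "apo q e = ereal (q*(1+e)/(1-e))" using False by (simp add: apo_def)
      have ap2: "q*(1+e) \<le> q*(1+e)/(1-e)" using apo_ge ap by simp
      from rm obtain x where x: "r_minus q e w = ereal x" "x \<le> q*(1+e)/(1-e)"
        using rm_bound[of q e w] qe e1 by auto
      show ?thesis unfolding delta_int_def d_plus_def d_minus_def A(1) B(1) a(1) x(1) ap
        using A B a x ap2 by simp
    qed
    have ext: "delta_ext q' e' q e w w' \<ge> ereal (q - Q')"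
      using rm
    proof
      assume "r_minus q e w = \<infinity>"
      thus ?thesis unfolding delta_ext_def d_plus_def d_minus_def A(1) B(1) a(1)
        using A B a by simp
    next
      assume "\<exists>x. r_minus q e w = ereal x \<and> q*(1+e) \<le> x \<and> (e < 1 \<longrightarrow> x \<le> q*(1+e)/(1-e))"
      then obtain x where x: "r_minus q e w = ereal x" "q*(1+e) \<le> x" by auto
      thus ?thesis unfolding delta_ext_def d_plus_def d_minus_def A(1) B(1) a(1) x(1)
        using A B a x qq by simp
    qed
    show ?thesis using int ext by simp
  qed
  have iff1: "(\<forall>(w, w') \<in> D3. d_plus q' e' q e w w' > 0 \<and> d_minus q' e' q e w w' > 0)
           \<longleftrightarrow> ereal q' - apo q e > 0"
  proof
    assume "\<forall>(w, w') \<in> D3. d_plus q' e' q e w w' > 0 \<and> d_minus q' e' q e w w' > 0"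
    thus "ereal q' - apo q e > 0" using D30 dm0 by auto
  next
    assume h: "ereal q' - apo q e > 0"
    show "\<forall>(w, w') \<in> D3. d_plus q' e' q e w w' > 0 \<and> d_minus q' e' q e w w' > 0"
    proof (clarify)
      fix w w' assume "(w, w') \<in> D3"
      then have "delta_int q' e' q e w w' > 0" using bnd h by (meson less_le_trans)
      thus "d_plus q' e' q e w w' > 0 \<and> d_minus q' e' q e w w' > 0" by (simp add: delta_int_def)
    qed
  qed
  have iff2: "(\<forall>(w, w') \<in> D3. d_plus q' e' q e w w' < 0 \<and> d_minus q' e' q e w w' < 0)
           \<longleftrightarrow> q - Q' > 0"
  proof
    assume "\<forall>(w, w') \<in> D3. d_plus q' e' q e w w' < 0 \<and> d_minus q' e' q e w w' < 0"
    thus "q - Q' > 0" using D30 dp0 by auto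
  next
    assume h: "q - Q' > 0"
    show "\<forall>(w, w') \<in> D3. d_plus q' e' q e w w' < 0 \<and> d_minus q' e' q e w w' < 0"
    proof (clarify)
      fix w w' assume "(w, w') \<in> D3"
      then have "delta_ext q' e' q e w w' > 0" using bnd[of w w'] h
        by (metis less_le_trans zero_ereal_def less_ereal.simps(1))
      thus "d_plus q' e' q e w w' < 0 \<and> d_minus q' e' q e w w' < 0"
        by (simp add: delta_ext_def ereal_uminus_less_reorder)
    qed
  qed
  show ?thesis using bnd di0 de0 iff1 iff2 by auto
qed

lemma part_ii:
  fixes q' e' q e Q' :: real
  assumes "q' > 0" "0 < e'" "e' < 1" and Q': "Q' = q' * (1 + e') / (1 - e')"
    and qe: "0 < q" "0 \<le> e" "e \<le> 1"
    and h1: "ereal q' - apo q e \<le> 0" and h2: "q - Q' \<le> 0"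
  shows "\<exists>(w, w') \<in> D3. d_plus q' e' q e w w' * d_minus q' e' q e w w' = 0"
proof -
  have rp0: "r_plus q e 0 = ereal q" using qe by (simp add: r_plus_def)
  have rp0': "r_plus q' e' 0 = ereal q'" using assms by (simp add: r_plus_def)
  have rmp: "r_minus q' e' pi = ereal q'" using assms by (simp add: r_minus_def)
  show ?thesis
  proof (cases "q' \<le> q")
    case True
    define c where "c = (q'*(1+e')/q - 1)/e'"
    have "q'*(1+e') \<le> q*(1+e')" using True assms mult_right_mono[of q' q "1+e'"] by simp
    hence c1: "c \<le> 1" using True assms qe unfolding c_def by (simp add: field_simps)
    have c2: "-1 \<le> c" using h2 assms unfolding c_def Q' by (simp add: field_simps)
    have den: "1 + e' * c = q'*(1+e')/q" using assms unfolding c_def by (simp add: field_simps)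
    have "r_plus q' e' (arccos c) = ereal q"
      using c1 c2 den assms qe by (simp add: r_plus_def)
    hence "d_plus q' e' q e 0 (arccos c) = 0" by (simp add: d_plus_def rp0)
    moreover have "(0, arccos c) \<in> D3" using c1 c2 by (simp add: D3_def arccos_lbound arccos_ubound)
    ultimately show ?thesis by force
  next
    case False
    show ?thesis
    proof (cases "q' \<le> q*(1+e)")
      case True
      have e0: "e > 0" using True False qe by (cases "e = 0") auto
      define c where "c = (q*(1+e)/q' - 1)/e"
      have "q*(1+e) \<le> q'*(1+e)" using False qe mult_right_mono[of q q' "1+e"] by simp
      hence c1: "c \<le> 1" using False assms qe e0 unfolding c_def by (simp add: field_simps)
      have c2: "0 \<le> c" using True assms qe e0 unfolding c_def by (simp add: field_simps)
      have den: "1 + e * c = q*(1+e)/q'" using assms e0 unfolding c_def by (simp add: field_simps)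
      have "r_plus q e (arccos c) = ereal q'"
        using c1 c2 den assms qe by (simp add: r_plus_def)
      hence "d_plus q' e' q e (arccos c) 0 = 0" by (simp add: d_plus_def rp0')
      moreover have "(arccos c, 0) \<in> D3" using c1 c2 using arccos_le_pi2[of c] arccos_lbound[of c] by (simp add: D3_def)
      ultimately show ?thesis by force
    next
      case False2: False
      have e0: "e > 0"
      proof (rule ccontr)
        assume "\<not> e > 0" hence "e = 0" using qe by auto
        thus False using h1 False by (simp add: apo_def)
      qed
      have key: "q'*(1-e) \<le> q*(1+e)"
      proof (cases "e = 1")
        case True thus ?thesis using qe by simp
      next
        case ne: False
        hence "q' \<le> q*(1+e)/(1-e)" using h1 by (simp add: apo_def)
        thus ?thesis using ne qe by (simp add: le_divide_eq)
      qed
      define c where "c = (1 - q*(1+e)/q')/e"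
      have c1: "c \<le> 1" using key assms qe e0 unfolding c_def by (simp add: field_simps)
      have c2: "0 \<le> c" using False2 assms qe e0 unfolding c_def by (simp add: field_simps)
      have den: "1 - e * c = q*(1+e)/q'" using assms e0 unfolding c_def by (simp add: field_simps)
      have "r_minus q e (arccos c) = ereal q'"
        using c1 c2 den assms qe by (simp add: r_minus_def)
      hence "d_minus q' e' q e (arccos c) pi = 0" by (simp add: d_minus_def rmp)
      moreover have "(arccos c, pi) \<in> D3" using c1 c2 using arccos_le_pi2[of c] arccos_lbound[of c] by (simp add: D3_def)
      ultimately show ?thesis by force
    qed
  qed
qed

theorem lemma5:
  fixes q' e' qmax :: real
  assumes "q' > 0" and "0 < e'" and "e' < 1" and "qmax > 0"
  defines "Q' \<equiv> q' * (1 + e') / (1 - e')"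
  shows
    "(\<forall>(q, e) \<in> D4 qmax.
        (\<forall>(w, w') \<in> D3.
            delta_int q' e' q e w w' \<ge> delta_int q' e' q e 0 pi
          \<and> delta_ext q' e' q e w w' \<ge> delta_ext q' e' q e 0 pi)
      \<and> delta_int q' e' q e 0 pi = ereal q' - apo q e
      \<and> delta_ext q' e' q e 0 pi = ereal (q - Q')
      \<and> ((\<forall>(w, w') \<in> D3. d_plus q' e' q e w w' > 0 \<and> d_minus q' e' q e w w' > 0)
           \<longleftrightarrow> ereal q' - apo q e > 0)
      \<and> ((\<forall>(w, w') \<in> D3. d_plus q' e' q e w w' < 0 \<and> d_minus q' e' q e w w' < 0)
           \<longleftrightarrow> q - Q' > 0))
   \<and> (\<forall>(q, e) \<in> D4 qmax.
        ereal q' - apo q e \<le> 0 \<and> q - Q' \<le> 0 \<longrightarrow>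
        (\<exists>(w, w') \<in> D3. d_plus q' e' q e w w' * d_minus q' e' q e w w' = 0))"
proof -
  have A: "\<forall>(q, e) \<in> D4 qmax. P q e" if "\<And>q e. 0 < q \<Longrightarrow> 0 \<le> e \<Longrightarrow> e \<le> 1 \<Longrightarrow> P q e" for P
    using that by (auto simp: D4_def)
  show ?thesis
    apply (intro conjI)
     apply (rule A, rule part_i[OF assms(1-3) Q'_def[THEN meta_eq_to_obj_eq]], assumption+)
    apply (rule A, intro impI, rule part_ii[OF assms(1-3) Q'_def[THEN meta_eq_to_obj_eq]], auto)
    done
qed

end
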